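(* Let $J=(a,b)$ be a bounded interval and let $\gamma=(x,y)\in H^2(J;\mathbb{R}^2)$ be a regular curve such that $x'(t)\ge0$ for all $t\in J$ and $y'(t_0)=0$ for some $t_0\in J$. Then $$\int_\gamma\kappa^2\,ds\ \ge\ \frac{[f(\theta(a))+f(\theta(b))]^2}{x(b)-x(a)}.$$
   Context: Here $\kappa$ is the curvature and $s$ the arc length of $\gamma$ (so $\int_\gamma\kappa^2ds=\int|\gamma_{ss}|^2ds$). Regular means $|\dot\gamma(t)|>0$ for all $t\in\bar J$ (the curve is $C^1$ on $\bar J$). For $t\in\bar J$, the tangential angle $\theta(t)\in(-\pi,\pi]$ is defined by $\dot\gamma(t)=|\dot\gamma(t)|(\cos\theta(t),\sin\theta(t))$. The function $f$ is the nonnegative even function $f(\theta)=\left|\int_0^\theta\sqrt{\cos\varphi}\,d\varphi\right|=\int_0^{|\theta|}\sqrt{\cos\varphi}\,d\varphi$. *)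

theory Defs
  imports "HOL-Analysis.Analysis"
begin

text \<open>Scalar Sobolev H^2 function on the bounded interval (a,b), with its (classical) first
  derivative u' and weak second derivative u'': u is C^1 on [a,b] with derivative u',
  u' is absolutely continuous, namely the indefinite integral of u'', and u'' is in L^2.\<close>
definition H2_on :: "real \<Rightarrow> real \<Rightarrow> (real \<Rightarrow> real) \<Rightarrow> (real \<Rightarrow> real) \<Rightarrow> (real \<Rightarrow> real) \<Rightarrow> bool" where
  "H2_on a b u u' u'' \<longleftrightarrow>
     (\<forall>t\<in>{a..b}. (u has_real_derivative u' t) (at t within {a..b})) \<and>
     u'' absolutely_integrable_on {a..b} \<and>
     (\<lambda>t. (u'' t)\<^sup>2) integrable_on {a..b} \<and>
     (\<forall>t\<in>{a..b}. u' t = u' a + integral {a..t} u'')"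

definition tangent_angle :: "real \<Rightarrow> real \<Rightarrow> real" where
  "tangent_angle dx dy = Arg (Complex dx dy)"

definition fpsi :: "real \<Rightarrow> real" where
  "fpsi \<theta> = integral {0..\<bar>\<theta>\<bar>} (\<lambda>\<phi>. sqrt (cos \<phi>))"

text \<open>Elastic energy int kappa^2 ds, with kappa = (x'y''-y'x'')/|gamma'|^3 and ds = |gamma'| dt.\<close>
definition elastic_energy ::
  "real \<Rightarrow> real \<Rightarrow> (real \<Rightarrow> real) \<Rightarrow> (real \<Rightarrow> real) \<Rightarrow> (real \<Rightarrow> real) \<Rightarrow> (real \<Rightarrow> real) \<Rightarrow> real" where
  "elastic_energy a b x' y' x'' y'' =
     integral {a..b} (\<lambda>t. ((x' t * y'' t - y' t * x'' t) / (sqrt ((x' t)\<^sup>2 + (y' t)\<^sup>2)) ^ 3)\<^sup>2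
                           * sqrt ((x' t)\<^sup>2 + (y' t)\<^sup>2))"

end

theory Submission
  imports Defs
begin


lemma incr_bound:
  fixes c d :: real and gp gq P Q :: "real \<Rightarrow> real"
  assumes ip: "gp absolutely_integrable_on {c..d}" and iq: "gq absolutely_integrable_on {c..d}"
    and P: "\<And>s t. s \<in> {c..d} \<Longrightarrow> t \<in> {c..d} \<Longrightarrow> s \<le> t \<Longrightarrow> P t - P s = integral {s..t} gp"
    and Q: "\<And>s t. s \<in> {c..d} \<Longrightarrow> t \<in> {c..d} \<Longrightarrow> s \<le> t \<Longrightarrow> Q t - Q s = integral {s..t} gq"
    and st: "s \<in> {c..d}" "t \<in> {c..d}" "s \<le> t"
  shows "\<bar>P t - P s\<bar> + \<bar>Q t - Q s\<bar> \<le>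
     integral {c..t} (\<lambda>r. \<bar>gp r\<bar> + \<bar>gq r\<bar>) - integral {c..s} (\<lambda>r. \<bar>gp r\<bar> + \<bar>gq r\<bar>)"
proof -
  have sub: "{s..t} \<subseteq> {c..d}" "{c..t} \<subseteq> {c..d}" using st by auto
  have ap: "gp integrable_on {c..d}" "(\<lambda>r. \<bar>gp r\<bar>) integrable_on {c..d}"
    using ip by (auto simp: absolutely_integrable_on_def)
  have aq: "gq integrable_on {c..d}" "(\<lambda>r. \<bar>gq r\<bar>) integrable_on {c..d}"
    using iq by (auto simp: absolutely_integrable_on_def)
  have iA: "(\<lambda>r. \<bar>gp r\<bar> + \<bar>gq r\<bar>) integrable_on {c..d}"
    using ap aq by (intro integrable_add) auto
  have "\<bar>P t - P s\<bar> \<le> integral {s..t} (\<lambda>r. \<bar>gp r\<bar>)"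
    unfolding P[OF st] using integral_norm_bound_integral[of gp "{s..t}" "\<lambda>r. \<bar>gp r\<bar>"]
      integrable_on_subinterval[OF ap(1) sub(1)] integrable_on_subinterval[OF ap(2) sub(1)] by auto
  moreover have "\<bar>Q t - Q s\<bar> \<le> integral {s..t} (\<lambda>r. \<bar>gq r\<bar>)"
    unfolding Q[OF st] using integral_norm_bound_integral[of gq "{s..t}" "\<lambda>r. \<bar>gq r\<bar>"]
      integrable_on_subinterval[OF aq(1) sub(1)] integrable_on_subinterval[OF aq(2) sub(1)] by auto
  moreover have "integral {s..t} (\<lambda>r. \<bar>gp r\<bar> + \<bar>gq r\<bar>) = integral {s..t} (\<lambda>r. \<bar>gp r\<bar>) + integral {s..t} (\<lambda>r. \<bar>gq r\<bar>)"
    by (rule integral_add) (use integrable_on_subinterval[OF ap(2) sub(1)] integrable_on_subinterval[OF aq(2) sub(1)] in auto)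
  moreover have "integral {c..s} (\<lambda>r. \<bar>gp r\<bar> + \<bar>gq r\<bar>) + integral {s..t} (\<lambda>r. \<bar>gp r\<bar> + \<bar>gq r\<bar>) = integral {c..t} (\<lambda>r. \<bar>gp r\<bar> + \<bar>gq r\<bar>)"
    by (rule Henstock_Kurzweil_Integration.integral_combine) (use st integrable_on_subinterval[OF iA sub(2)] in auto)
  ultimately show ?thesis by linarith
qed

lemma chain_AC:
  fixes c d M :: real and gp gq P Q A B :: "real \<Rightarrow> real" and \<Phi> :: "complex \<Rightarrow> real"
  assumes cd: "c \<le> d"
    and ip: "gp absolutely_integrable_on {c..d}" and iq: "gq absolutely_integrable_on {c..d}"
    and P: "\<And>s t. s \<in> {c..d} \<Longrightarrow> t \<in> {c..d} \<Longrightarrow> s \<le> t \<Longrightarrow> P t - P s = integral {s..t} gp"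
    and Q: "\<And>s t. s \<in> {c..d} \<Longrightarrow> t \<in> {c..d} \<Longrightarrow> s \<le> t \<Longrightarrow> Q t - Q s = integral {s..t} gq"
    and der: "\<And>t. t \<in> {c..d} \<Longrightarrow>
      (\<Phi> has_derivative (\<lambda>h. A t * Re h + B t * Im h)) (at (Complex (P t) (Q t)))"
    and bdA: "\<And>t. t \<in> {c..d} \<Longrightarrow> \<bar>A t\<bar> \<le> M"
    and bdB: "\<And>t. t \<in> {c..d} \<Longrightarrow> \<bar>B t\<bar> \<le> M"
  shows "((\<lambda>t. A t * gp t + B t * gq t) has_integral
           (\<Phi> (Complex (P d) (Q d)) - \<Phi> (Complex (P c) (Q c)))) {c..d}"
proof -
  define z where "z t = Complex (P t) (Q t)" for t
  define IA where "IA t = integral {c..t} (\<lambda>r. \<bar>gp r\<bar> + \<bar>gq r\<bar>)" for t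
  define D where "D t = A t * gp t + B t * gq t" for t
  have inc: "\<bar>P t - P s\<bar> + \<bar>Q t - Q s\<bar> \<le> IA t - IA s"
    if "s \<in> {c..d}" "t \<in> {c..d}" "s \<le> t" for s t
    unfolding IA_def by (rule incr_bound[OF ip iq P Q that])
  have nz: "norm (z t - z s) \<le> \<bar>P t - P s\<bar> + \<bar>Q t - Q s\<bar>" for s t
    using cmod_le[of "z t - z s"] by (simp add: z_def)
  have ap: "gp integrable_on {c..d}" using ip by (auto simp: absolutely_integrable_on_def)
  have aq: "gq integrable_on {c..d}" using iq by (auto simp: absolutely_integrable_on_def)
  have Peq: "P t = P c + integral {c..t} gp" if "t \<in> {c..d}" for t
    using P[of c t] that by auto
  have Qeq: "Q t = Q c + integral {c..t} gq" if "t \<in> {c..d}" for t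
    using Q[of c t] that by auto
  have contP: "continuous_on {c..d} P"
  proof -
    have "continuous_on {c..d} (\<lambda>t. P c + integral {c..t} gp)"
      by (intro continuous_intros indefinite_integral_continuous_1 ap)
    then show ?thesis by (rule continuous_on_eq) (rule Peq[symmetric])
  qed
  have contQ: "continuous_on {c..d} Q"
  proof -
    have "continuous_on {c..d} (\<lambda>t. Q c + integral {c..t} gq)"
      by (intro continuous_intros indefinite_integral_continuous_1 aq)
    then show ?thesis by (rule continuous_on_eq) (rule Qeq[symmetric])
  qed
  have IAmono: "IA c \<le> IA d" using inc[of c d] cd by auto
  show ?thesis
    unfolding D_def[symmetric] cbox_interval[symmetric] has_integral
  proof (intro allI impI)
    fix e :: real assume e: "e > 0"
    define M' where "M' = \<bar>M\<bar> + 1"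
    define G where "G = IA d - IA c + 1"
    have M'pos: "M' > 0" and Gpos: "G > 0" using IAmono by (auto simp: M'_def G_def)
    define e1 where "e1 = e / (4 * M')"
    define \<eta> where "\<eta> = e / (4 * G)"
    have e1: "e1 > 0" and \<eta>: "\<eta> > 0" using e M'pos Gpos by (auto simp: e1_def \<eta>_def)
    obtain \<gamma>1 where g1: "gauge \<gamma>1" and H1: "\<And>p. p tagged_partial_division_of cbox c d \<Longrightarrow> \<gamma>1 fine p \<Longrightarrow>
        (\<Sum>(x, k)\<in>p. norm (Henstock_Kurzweil_Integration.content k *\<^sub>R gp x - integral k gp)) < e1"
      using Henstock_lemma[of gp c d e1] ap e1 by (auto simp: cbox_interval)
    obtain \<gamma>2 where g2: "gauge \<gamma>2" and H2: "\<And>p. p tagged_partial_division_of cbox c d \<Longrightarrow> \<gamma>2 fine p \<Longrightarrow>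
        (\<Sum>(x, k)\<in>p. norm (Henstock_Kurzweil_Integration.content k *\<^sub>R gq x - integral k gq)) < e1"
      using Henstock_lemma[of gq c d e1] aq e1 by (auto simp: cbox_interval)
    have "\<forall>t\<in>{c..d}. \<exists>r>0. \<forall>s\<in>{c..d}. \<bar>s - t\<bar> < r \<longrightarrow>
       \<bar>\<Phi> (z s) - \<Phi> (z t) - (A t * Re (z s - z t) + B t * Im (z s - z t))\<bar> \<le> \<eta> * norm (z s - z t)"
    proof
      fix t assume t: "t \<in> {c..d}"
      from der[OF t] have "\<forall>e>0. \<exists>d>0. \<forall>y. norm (y - z t) < d \<longrightarrow>
          norm (\<Phi> y - \<Phi> (z t) - (A t * Re (y - z t) + B t * Im (y - z t))) \<le> e * norm (y - z t)"
        unfolding has_derivative_at_alt z_def by simp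
      then obtain \<delta> where \<delta>: "\<delta> > 0" and H\<delta>: "\<And>y. norm (y - z t) < \<delta> \<Longrightarrow>
          norm (\<Phi> y - \<Phi> (z t) - (A t * Re (y - z t) + B t * Im (y - z t))) \<le> \<eta> * norm (y - z t)"
        using \<eta> by blast
      have \<delta>2: "\<delta>/2 > 0" using \<delta> by simp
      obtain r1 where r1: "r1 > 0" "\<And>s. s \<in> {c..d} \<Longrightarrow> dist s t < r1 \<Longrightarrow> dist (P s) (P t) < \<delta>/2"
        using contP t \<delta>2 unfolding continuous_on_iff by blast
      obtain r2 where r2: "r2 > 0" "\<And>s. s \<in> {c..d} \<Longrightarrow> dist s t < r2 \<Longrightarrow> dist (Q s) (Q t) < \<delta>/2"
        using contQ t \<delta>2 unfolding continuous_on_iff by blast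
      show "\<exists>r>0. \<forall>s\<in>{c..d}. \<bar>s - t\<bar> < r \<longrightarrow>
       \<bar>\<Phi> (z s) - \<Phi> (z t) - (A t * Re (z s - z t) + B t * Im (z s - z t))\<bar> \<le> \<eta> * norm (z s - z t)"
      proof (intro exI[of _ "min r1 r2"] conjI ballI impI)
        show "min r1 r2 > 0" using r1 r2 by auto
        fix s assume s: "s \<in> {c..d}" "\<bar>s - t\<bar> < min r1 r2"
        have "dist (P s) (P t) < \<delta>/2" "dist (Q s) (Q t) < \<delta>/2"
          using r1(2)[OF s(1)] r2(2)[OF s(1)] s(2) by (auto simp: dist_real_def)
        then have "norm (z s - z t) < \<delta>" using nz[of s t] by (auto simp: dist_real_def)
        from H\<delta>[OF this] show "\<bar>\<Phi> (z s) - \<Phi> (z t) - (A t * Re (z s - z t) + B t * Im (z s - z t))\<bar> \<le> \<eta> * norm (z s - z t)"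
          by simp
      qed
    qed
    then have "\<exists>r. \<forall>t\<in>{c..d}. r t > 0 \<and> (\<forall>s\<in>{c..d}. \<bar>s - t\<bar> < r t \<longrightarrow>
       \<bar>\<Phi> (z s) - \<Phi> (z t) - (A t * Re (z s - z t) + B t * Im (z s - z t))\<bar> \<le> \<eta> * norm (z s - z t))"
      by (rule bchoice)
    then obtain r where r: "\<And>t. t \<in> {c..d} \<Longrightarrow> r t > 0"
      and rH: "\<And>t s. t \<in> {c..d} \<Longrightarrow> s \<in> {c..d} \<Longrightarrow> \<bar>s - t\<bar> < r t \<Longrightarrow>
       \<bar>\<Phi> (z s) - \<Phi> (z t) - (A t * Re (z s - z t) + B t * Im (z s - z t))\<bar> \<le> \<eta> * norm (z s - z t)"
      by blast
    define r' where "r' t = (if t \<in> {c..d} then r t else 1)" for t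
    have r'pos: "\<forall>t. r' t > 0" using r by (auto simp: r'_def)
    define \<gamma> where "\<gamma> t = \<gamma>1 t \<inter> (\<gamma>2 t \<inter> ball t (r' t))" for t
    have g\<gamma>: "gauge \<gamma>" unfolding \<gamma>_def
      by (intro gauge_Int g1 g2 gauge_ball_dependent r'pos)
    have main: "norm ((\<Sum>(x, k)\<in>\<D>. Henstock_Kurzweil_Integration.content k *\<^sub>R D x) - (\<Phi> (Complex (P d) (Q d)) - \<Phi> (Complex (P c) (Q c)))) < e"
      if Dd: "\<D> tagged_division_of cbox c d" and fine: "\<gamma> fine \<D>" for \<D>
    proof -
      have fin: "finite \<D>" using Dd by (rule tagged_division_ofD)
      have pd: "\<D> tagged_partial_division_of cbox c d" using Dd by (simp add: tagged_division_of_def)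
      have f1: "\<gamma>1 fine \<D>" and f2: "\<gamma>2 fine \<D>" and f3: "(\<lambda>t. ball t (r' t)) fine \<D>"
        using fine unfolding \<gamma>_def fine_Int by auto
      have Dd': "\<D> tagged_division_of {c..d}" using Dd by (simp add: cbox_interval)
      have tele: "(\<Sum>(t,K)\<in>\<D>. \<Phi> (z (Sup K)) - \<Phi> (z (Inf K))) = \<Phi> (z d) - \<Phi> (z c)"
        using additive_tagged_division_1[OF cd Dd', of "\<lambda>s. \<Phi> (z s)"] by simp
      have teleA: "(\<Sum>(t,K)\<in>\<D>. IA (Sup K) - IA (Inf K)) = IA d - IA c"
        using additive_tagged_division_1[OF cd Dd', of IA] by simp
      have elem: "\<bar>Henstock_Kurzweil_Integration.content K * D t - (\<Phi> (z (Sup K)) - \<Phi> (z (Inf K)))\<bar> \<le>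
          M' * (norm (Henstock_Kurzweil_Integration.content K *\<^sub>R gp t - integral K gp) + norm (Henstock_Kurzweil_Integration.content K *\<^sub>R gq t - integral K gq))
          + \<eta> * (IA (Sup K) - IA (Inf K))" if tK: "(t, K) \<in> \<D>" for t K
      proof -
        have tK1: "t \<in> K" and tK2: "K \<subseteq> {c..d}" using tagged_division_ofD(2,3)[OF Dd' tK] by auto
        obtain u v where uv: "K = cbox u v" using tagged_division_ofD(4)[OF Dd' tK] by auto
        have Kuv: "K = {u..v}" using uv by (simp add: cbox_interval)
        have tuv: "u \<le> t" "t \<le> v" using tK1 Kuv by auto
        have uvin: "u \<in> {c..d}" "v \<in> {c..d}" using tK2 Kuv tuv by auto
        have tin: "t \<in> {c..d}" using tK1 tK2 by auto
        have SI: "Sup K = v" "Inf K = u" "Henstock_Kurzweil_Integration.content K = v - u" using Kuv tuv by auto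
        have Kball: "K \<subseteq> ball t (r' t)" using f3 tK unfolding fine_def by auto
        have "u \<in> K" "v \<in> K" using Kuv tuv by auto
        then have "u \<in> ball t (r' t)" "v \<in> ball t (r' t)" using Kball by auto
        then have "dist t u < r t" "dist t v < r t" using tin by (auto simp: r'_def)
        then have uball: "\<bar>u - t\<bar> < r t" and vball: "\<bar>v - t\<bar> < r t"
          by (auto simp: dist_real_def abs_minus_commute)
        have iP: "integral K gp = P v - P u" using P[OF uvin] tuv Kuv by auto
        have iQ: "integral K gq = Q v - Q u" using Q[OF uvin] tuv Kuv by auto
        have Ev: "\<bar>\<Phi> (z v) - \<Phi> (z t) - (A t * Re (z v - z t) + B t * Im (z v - z t))\<bar> \<le> \<eta> * (IA v - IA t)"
        proof -
          have "\<eta> * norm (z v - z t) \<le> \<eta> * (IA v - IA t)"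
            using nz[of v t] inc[of t v] tin uvin tuv \<eta> by (intro mult_left_mono) auto
          then show ?thesis using rH[OF tin uvin(2) vball] by linarith
        qed
        have Eu: "\<bar>\<Phi> (z u) - \<Phi> (z t) - (A t * Re (z u - z t) + B t * Im (z u - z t))\<bar> \<le> \<eta> * (IA t - IA u)"
        proof -
          have "\<eta> * norm (z u - z t) \<le> \<eta> * (IA t - IA u)"
            using nz[of t u] inc[of u t] tin uvin tuv \<eta> by (intro mult_left_mono) (auto simp: norm_minus_commute)
          then show ?thesis using rH[OF tin uvin(1) uball] by linarith
        qed
        have E1: "\<bar>A t * ((v - u) * gp t - (P v - P u)) + B t * ((v - u) * gq t - (Q v - Q u))\<bar> \<le>
            M' * (\<bar>(v - u) * gp t - (P v - P u)\<bar> + \<bar>(v - u) * gq t - (Q v - Q u)\<bar>)"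
        proof -
          have a: "\<bar>A t\<bar> \<le> M'" "\<bar>B t\<bar> \<le> M'" using bdA[OF tin] bdB[OF tin] by (auto simp: M'_def)
          have "\<bar>A t * ((v - u) * gp t - (P v - P u))\<bar> \<le> M' * \<bar>(v - u) * gp t - (P v - P u)\<bar>"
            unfolding abs_mult by (rule mult_right_mono[OF a(1)]) auto
          moreover have "\<bar>B t * ((v - u) * gq t - (Q v - Q u))\<bar> \<le> M' * \<bar>(v - u) * gq t - (Q v - Q u)\<bar>"
            unfolding abs_mult by (rule mult_right_mono[OF a(2)]) auto
          ultimately show ?thesis unfolding distrib_left by linarith
        qed
        have zz: "Re (z v - z t) = P v - P t" "Im (z v - z t) = Q v - Q t"
                 "Re (z u - z t) = P u - P t" "Im (z u - z t) = Q u - Q t" by (auto simp: z_def)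
        have "Henstock_Kurzweil_Integration.content K * D t - (\<Phi> (z (Sup K)) - \<Phi> (z (Inf K))) =
          (A t * ((v - u) * gp t - (P v - P u)) + B t * ((v - u) * gq t - (Q v - Q u)))
          - (\<Phi> (z v) - \<Phi> (z t) - (A t * Re (z v - z t) + B t * Im (z v - z t)))
          + (\<Phi> (z u) - \<Phi> (z t) - (A t * Re (z u - z t) + B t * Im (z u - z t)))"
          unfolding SI zz D_def by (simp add: algebra_simps)
        also have "\<bar>\<dots>\<bar> \<le> M' * (\<bar>(v - u) * gp t - (P v - P u)\<bar> + \<bar>(v - u) * gq t - (Q v - Q u)\<bar>)
            + \<eta> * (IA v - IA t) + \<eta> * (IA t - IA u)"
          using E1 Ev Eu by linarith
        also have "\<dots> = M' * (norm (Henstock_Kurzweil_Integration.content K *\<^sub>R gp t - integral K gp) + norm (Henstock_Kurzweil_Integration.content K *\<^sub>R gq t - integral K gq))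
          + \<eta> * (IA (Sup K) - IA (Inf K))"
          unfolding SI iP iQ by (simp add: algebra_simps)
        finally show ?thesis .
      qed
      have "(\<Sum>(x, k)\<in>\<D>. Henstock_Kurzweil_Integration.content k *\<^sub>R D x) - (\<Phi> (Complex (P d) (Q d)) - \<Phi> (Complex (P c) (Q c)))
          = (\<Sum>(t,K)\<in>\<D>. Henstock_Kurzweil_Integration.content K * D t - (\<Phi> (z (Sup K)) - \<Phi> (z (Inf K))))"
        using tele unfolding z_def by (simp add: sum_subtractf split_def)
      also have "\<bar>\<dots>\<bar> \<le> (\<Sum>(t,K)\<in>\<D>. \<bar>Henstock_Kurzweil_Integration.content K * D t - (\<Phi> (z (Sup K)) - \<Phi> (z (Inf K)))\<bar>)"
        by (rule order_trans[OF sum_abs]) (simp add: split_def)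
      also have "\<dots> \<le> (\<Sum>(t,K)\<in>\<D>. M' * (norm (Henstock_Kurzweil_Integration.content K *\<^sub>R gp t - integral K gp) + norm (Henstock_Kurzweil_Integration.content K *\<^sub>R gq t - integral K gq))
          + \<eta> * (IA (Sup K) - IA (Inf K)))"
        using elem by (intro sum_mono) auto
      also have "\<dots> = M' * (\<Sum>(t,K)\<in>\<D>. norm (Henstock_Kurzweil_Integration.content K *\<^sub>R gp t - integral K gp))
          + M' * (\<Sum>(t,K)\<in>\<D>. norm (Henstock_Kurzweil_Integration.content K *\<^sub>R gq t - integral K gq))
          + \<eta> * (\<Sum>(t,K)\<in>\<D>. IA (Sup K) - IA (Inf K))"
        by (simp add: split_def sum.distrib sum_distrib_left distrib_left)
      also have "\<dots> \<le> M' * e1 + M' * e1 + \<eta> * (IA d - IA c)"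
        unfolding teleA using H1[OF pd f1] H2[OF pd f2] M'pos \<eta>
        by (intro add_mono mult_left_mono) auto
      also have "\<dots> < e"
      proof -
        have "\<eta> * (IA d - IA c) \<le> \<eta> * G" using \<eta> by (intro mult_left_mono) (auto simp: G_def)
        moreover have "\<eta> * G = e / 4" using Gpos by (simp add: \<eta>_def)
        moreover have "e / 4 < e / 4 * 2" using e by simp
        moreover have "M' * e1 = e / 4" using M'pos by (simp add: e1_def)
        ultimately show ?thesis using e by linarith
      qed
      finally show ?thesis by simp
    qed
    show "\<exists>\<gamma>. gauge \<gamma> \<and> (\<forall>\<D>. \<D> tagged_division_of cbox c d \<and> \<gamma> fine \<D> \<longrightarrow>
       norm ((\<Sum>(x, k)\<in>\<D>. Henstock_Kurzweil_Integration.content k *\<^sub>R D x) - (\<Phi> (Complex (P d) (Q d)) - \<Phi> (Complex (P c) (Q c)))) < e)"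
    proof (intro exI[of _ \<gamma>] conjI allI impI)
      show "gauge \<gamma>" by (rule g\<gamma>)
      fix \<D> assume H: "\<D> tagged_division_of cbox c d \<and> \<gamma> fine \<D>"
      show "norm ((\<Sum>(x, k)\<in>\<D>. Henstock_Kurzweil_Integration.content k *\<^sub>R D x) - (\<Phi> (Complex (P d) (Q d)) - \<Phi> (Complex (P c) (Q c)))) < e"
        by (rule main[OF conjunct1[OF H] conjunct2[OF H]])
    qed
  qed
qed



lemma amgm_inf:
  fixes I E X :: real
  assumes E: "E \<ge> 0" and X: "X \<ge> 0" and H: "\<And>l. l > 0 \<Longrightarrow> \<bar>I\<bar> \<le> (l * E + X / l) / 2"
  shows "I\<^sup>2 \<le> E * X"
proof (cases "E > 0 \<and> X > 0")
  case True
  define l where "l = sqrt (X / E)"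
  have l: "l > 0" using True by (simp add: l_def)
  have "l * E = sqrt (E * X)" using True
    by (simp add: l_def real_sqrt_divide real_sqrt_mult field_simps)
  moreover have "X / l = sqrt (E * X)" using True
    by (simp add: l_def real_sqrt_divide real_sqrt_mult field_simps)
  ultimately have "\<bar>I\<bar> \<le> sqrt (E * X)" using H[OF l] by simp
  then have "\<bar>I\<bar>\<^sup>2 \<le> (sqrt (E * X))\<^sup>2" by (intro power_mono) auto
  then show ?thesis using E X by simp
next
  case False
  then have EX: "E = 0 \<or> X = 0" using E X by auto
  have "I = 0"
  proof (rule ccontr)
    assume I: "I \<noteq> 0"
    then have aI: "\<bar>I\<bar> > 0" by simp
    show False
    proof (cases "E = 0")
      case True
      define l where "l = (X + 1) / \<bar>I\<bar>"
      have l: "l > 0" using aI X by (simp add: l_def)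
      have "X / l = X * \<bar>I\<bar> / (X + 1)" using aI X by (simp add: l_def)
      also have "\<dots> < \<bar>I\<bar> * 2"
      proof -
        have "0 \<le> X * \<bar>I\<bar>" using X by simp
        then have "X * \<bar>I\<bar> < \<bar>I\<bar> * 2 * (X + 1)" using aI by (simp add: algebra_simps)
        then show ?thesis using X by (simp add: divide_less_eq)
      qed
      finally show False using H[OF l] True by simp
    next
      case False
      then have X0: "X = 0" using EX by simp
      define l where "l = \<bar>I\<bar> / (E + 1)"
      have l: "l > 0" using aI E by (simp add: l_def)
      have "l * E = \<bar>I\<bar> * E / (E + 1)" using aI E by (simp add: l_def)
      also have "\<dots> < \<bar>I\<bar> * 2"
      proof -
        have "0 \<le> E * \<bar>I\<bar>" using E by simp
        then have "\<bar>I\<bar> * E < \<bar>I\<bar> * 2 * (E + 1)" using aI by (simp add: algebra_simps)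
        then show ?thesis using E by (simp add: divide_less_eq)
      qed
      finally show False using H[OF l] X0 by simp
    qed
  qed
  then show ?thesis using E X by simp
qed

lemma cs_integral:
  fixes D K p :: "real \<Rightarrow> real" and S :: "real set"
  assumes iD: "(D has_integral I) S" and iK: "(K has_integral E) S" and ip: "(p has_integral X) S"
    and K0: "\<And>t. t \<in> S \<Longrightarrow> K t \<ge> 0" and p0: "\<And>t. t \<in> S \<Longrightarrow> p t \<ge> 0"
    and DK: "\<And>t. t \<in> S \<Longrightarrow> (D t)\<^sup>2 = K t * p t"
  shows "I\<^sup>2 \<le> E * X"
proof (rule amgm_inf)
  show "E \<ge> 0" using has_integral_nonneg[OF iK] K0 by auto
  show "X \<ge> 0" using has_integral_nonneg[OF ip] p0 by auto
  fix l :: real assume l: "l > 0"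
  have pw: "\<bar>D t\<bar> \<le> (l * K t + p t / l) / 2" if t: "t \<in> S" for t
  proof -
    have "0 \<le> (l * K t - p t / l)\<^sup>2" by simp
    then have "4 * (K t * p t) \<le> (l * K t + p t / l)\<^sup>2" using l
      by (simp add: power2_eq_square field_simps)
    then have "(2 * \<bar>D t\<bar>)\<^sup>2 \<le> (l * K t + p t / l)\<^sup>2" using DK[OF t]
      by (simp add: power_mult_distrib)
    moreover have "0 \<le> l * K t + p t / l" using l K0[OF t] p0[OF t] by simp
    ultimately have "2 * \<bar>D t\<bar> \<le> l * K t + p t / l"
      using power2_le_imp_le by blast
    then show ?thesis by simp
  qed
  have iR: "((\<lambda>t. (l * K t + p t / l) / 2) has_integral (l * E + X / l) / 2) S"
    by (intro has_integral_divide has_integral_add has_integral_mult_right iK ip)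
  have "I \<le> (l * E + X / l) / 2"
    by (rule has_integral_le[OF iD iR]) (use pw in force)
  moreover have "- I \<le> (l * E + X / l) / 2"
    by (rule has_integral_le[OF has_integral_neg[OF iD] iR]) (use pw in force)
  ultimately show "\<bar>I\<bar> \<le> (l * E + X / l) / 2" by linarith
qed

lemma final_ineq:
  fixes f1 f2 E1 E2 X1 X2 :: real
  assumes "f1 \<ge> 0" "f2 \<ge> 0" "E1 \<ge> 0" "E2 \<ge> 0" "X1 \<ge> 0" "X2 \<ge> 0"
    and h1: "f1\<^sup>2 \<le> E1 * X1" and h2: "f2\<^sup>2 \<le> E2 * X2"
  shows "(f1 + f2)\<^sup>2 / (X1 + X2) \<le> E1 + E2"
proof (cases "X1 + X2 = 0")
  case True then show ?thesis using assms by simp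
next
  case False
  then have pos: "X1 + X2 > 0" using assms by linarith
  have s1: "f1 \<le> sqrt (E1 * X1)" using h1 assms real_le_rsqrt by blast
  have s2: "f2 \<le> sqrt (E2 * X2)" using h2 assms real_le_rsqrt by blast
  have "(f1 + f2)\<^sup>2 \<le> (sqrt (E1 * X1) + sqrt (E2 * X2))\<^sup>2"
    using s1 s2 assms by (intro power_mono) auto
  also have "\<dots> = E1 * X1 + E2 * X2 + 2 * sqrt ((E1 * X2) * (E2 * X1))"
    using assms by (simp add: power2_sum real_sqrt_mult mult_ac power_mult_distrib)
  also have "\<dots> \<le> E1 * X1 + E2 * X2 + (E1 * X2 + E2 * X1)"
    using arith_geo_mean_sqrt[of "E1 * X2" "E2 * X1"] assms by simp
  also have "\<dots> = (E1 + E2) * (X1 + X2)" by (simp add: algebra_simps)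
  finally show ?thesis using pos by (simp add: divide_le_eq)
qed

lemma Fs_deriv:
  assumes "-2 < \<theta>" "\<theta> < 2"
  shows "((\<lambda>\<theta>. integral {-2..\<theta>} (\<lambda>\<phi>. sqrt (cos \<phi>))) has_real_derivative sqrt (cos \<theta>)) (at \<theta>)"
proof -
  have c: "continuous_on {-2..2} (\<lambda>\<phi>. sqrt (cos \<phi>))" by (intro continuous_intros)
  have "((\<lambda>\<theta>. integral {-2..\<theta>} (\<lambda>\<phi>. sqrt (cos \<phi>))) has_real_derivative sqrt (cos \<theta>)) (at \<theta> within {-2..2})"
    using integral_has_real_derivative[OF c] assms by auto
  then have "((\<lambda>\<theta>. integral {-2..\<theta>} (\<lambda>\<phi>. sqrt (cos \<phi>))) has_real_derivative sqrt (cos \<theta>)) (at \<theta> within {-2<..<2})"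
    by (rule has_field_derivative_subset) auto
  then show ?thesis using at_within_open[of \<theta> "{-2<..<2}"] assms by simp
qed

lemma fpsi_eq:
  assumes "\<bar>\<theta>\<bar> \<le> pi / 2"
  shows "fpsi \<theta> = \<bar>integral {-2..\<theta>} (\<lambda>\<phi>. sqrt (cos \<phi>)) - integral {-2..0} (\<lambda>\<phi>. sqrt (cos \<phi>))\<bar>"
proof -
  have p2: "pi / 2 < 2" using pi_less_4 by simp
  have int: "(\<lambda>\<phi>. sqrt (cos \<phi>)) integrable_on {u..v}" for u v
    by (intro integrable_continuous_interval continuous_intros)
  have comb: "integral {-2..v} (\<lambda>\<phi>. sqrt (cos \<phi>)) = integral {-2..u} (\<lambda>\<phi>. sqrt (cos \<phi>)) + integral {u..v} (\<lambda>\<phi>. sqrt (cos \<phi>))"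
    if "-2 \<le> u" "u \<le> v" for u v
    by (rule Henstock_Kurzweil_Integration.integral_combine[symmetric]) (use that int in auto)
  have nn: "0 \<le> integral {0..w} (\<lambda>\<phi>. sqrt (cos \<phi>))" if "0 \<le> w" "w \<le> pi/2" for w
    by (rule integral_nonneg[OF int]) (use that in \<open>auto intro!: cos_ge_zero\<close>)
  show ?thesis
  proof (cases "\<theta> \<ge> 0")
    case True
    then show ?thesis using comb[of 0 \<theta>] nn[of \<theta>] assms by (simp add: fpsi_def)
  next
    case False
    have r: "integral {\<theta>..0} (\<lambda>\<phi>. sqrt (cos \<phi>)) = integral {0..-\<theta>} (\<lambda>\<phi>. sqrt (cos \<phi>))"
      using Henstock_Kurzweil_Integration.integral_reflect_real[of "-\<theta>" 0 "\<lambda>\<phi>. sqrt (cos \<phi>)"]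
      unfolding cos_minus minus_zero minus_minus .
    show ?thesis using False comb[of \<theta> 0] nn[of "-\<theta>"] assms p2 r by (simp add: fpsi_def)
  qed
qed



theorem lemma1:
  fixes a b t0 :: real and x y x' y' x'' y'' :: "real \<Rightarrow> real"
  assumes "a < b"
    and "H2_on a b x x' x''" and "H2_on a b y y' y''"
    and "\<forall>t\<in>{a..b}. (x' t)\<^sup>2 + (y' t)\<^sup>2 > 0"
    and "\<forall>t\<in>{a<..<b}. x' t \<ge> 0"
    and "t0 \<in> {a<..<b}" and "y' t0 = 0"
  shows "elastic_energy a b x' y' x'' y'' \<ge>
    (fpsi (tangent_angle (x' a) (y' a)) + fpsi (tangent_angle (x' b) (y' b)))\<^sup>2 / (x b - x a)"
proof -
  have ab: "a < b" by fact
  note H2x = assms(2)[unfolded H2_on_def] and H2y = assms(3)[unfolded H2_on_def]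
  have dx: "\<And>t. t \<in> {a..b} \<Longrightarrow> (x has_real_derivative x' t) (at t within {a..b})" using H2x by blast
  have ixx: "x'' absolutely_integrable_on {a..b}" using H2x by blast
  have ix2: "(\<lambda>t. (x'' t)\<^sup>2) integrable_on {a..b}" using H2x by blast
  have px: "\<And>t. t \<in> {a..b} \<Longrightarrow> x' t = x' a + integral {a..t} x''" using H2x by blast
  have iyy: "y'' absolutely_integrable_on {a..b}" using H2y by blast
  have iy2: "(\<lambda>t. (y'' t)\<^sup>2) integrable_on {a..b}" using H2y by blast
  have py: "\<And>t. t \<in> {a..b} \<Longrightarrow> y' t = y' a + integral {a..t} y''" using H2y by blast
  have t0: "a < t0" "t0 < b" using assms(6) by auto
  define V where "V t = (x' t)\<^sup>2 + (y' t)\<^sup>2" for t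
  have Vpos: "V t > 0" if "t \<in> {a..b}" for t using assms(4) that by (auto simp: V_def)
  have ixi: "x'' integrable_on {a..b}" using ixx by (auto simp: absolutely_integrable_on_def)
  have iyi: "y'' integrable_on {a..b}" using iyy by (auto simp: absolutely_integrable_on_def)
  have PX: "x' t - x' s = integral {s..t} x''" if "s \<in> {a..b}" "t \<in> {a..b}" "s \<le> t" for s t
  proof -
    have "integral {a..s} x'' + integral {s..t} x'' = integral {a..t} x''"
      by (rule Henstock_Kurzweil_Integration.integral_combine)
         (use that integrable_on_subinterval[OF ixi, of a t] in auto)
    then show ?thesis using px[OF that(1)] px[OF that(2)] by linarith
  qed
  have PY: "y' t - y' s = integral {s..t} y''" if "s \<in> {a..b}" "t \<in> {a..b}" "s \<le> t" for s t
  proof -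
    have "integral {a..s} y'' + integral {s..t} y'' = integral {a..t} y''"
      by (rule Henstock_Kurzweil_Integration.integral_combine)
         (use that integrable_on_subinterval[OF iyi, of a t] in auto)
    then show ?thesis using py[OF that(1)] py[OF that(2)] by linarith
  qed
  have contx: "continuous_on {a..b} x'"
  proof -
    have "continuous_on {a..b} (\<lambda>t. x' a + integral {a..t} x'')"
      by (intro continuous_intros indefinite_integral_continuous_1 ixi)
    then show ?thesis by (rule continuous_on_eq) (rule px[symmetric])
  qed
  have conty: "continuous_on {a..b} y'"
  proof -
    have "continuous_on {a..b} (\<lambda>t. y' a + integral {a..t} y'')"
      by (intro continuous_intros indefinite_integral_continuous_1 iyi)
    then show ?thesis by (rule continuous_on_eq) (rule py[symmetric])
  qed
  have xnn: "x' t \<ge> 0" if "t \<in> {a..b}" for t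
    by (rule continuous_ge_on_closure[of "{a<..<b}" x' t 0])
       (use contx that assms(5) closure_greaterThanLessThan[OF ab] in auto)
  define sq where "sq t = sqrt (V t)" for t
  have sqpos: "sq t > 0" if "t \<in> {a..b}" for t using Vpos[OF that] by (simp add: sq_def)
  have sqV: "(sq t)\<^sup>2 = V t" if "t \<in> {a..b}" for t using Vpos[OF that] by (simp add: sq_def)
  have contsq: "continuous_on {a..b} sq" unfolding sq_def V_def
    by (intro continuous_intros contx conty)
  obtain t1 where t1: "t1 \<in> {a..b}" "\<And>t. t \<in> {a..b} \<Longrightarrow> sq t1 \<le> sq t"
    using continuous_attains_inf[OF compact_Icc _ contsq] ab by auto
  define m where "m = sq t1"
  have mpos: "m > 0" using sqpos[OF t1(1)] by (simp add: m_def)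
  have msq: "m \<le> sq t" if "t \<in> {a..b}" for t using t1(2)[OF that] by (simp add: m_def)
  define z where "z t = Complex (x' t) (y' t)" for t
  have znz: "z t \<noteq> 0" if "t \<in> {a..b}" for t
    using Vpos[OF that] by (auto simp: z_def V_def complex_eq_iff)
  have zRe: "Re (z t) \<ge> 0" if "t \<in> {a..b}" for t using xnn[OF that] by (simp add: z_def)
  have zArg: "\<bar>Arg (z t)\<bar> \<le> pi / 2" if "t \<in> {a..b}" for t using zRe[OF that] Arg_Re_nonneg by blast
  have zcmod: "cmod (z t) = sq t" for t by (simp add: z_def sq_def V_def complex_norm)
  define Fs where "Fs \<theta> = integral {-2..\<theta>} (\<lambda>\<phi>. sqrt (cos \<phi>))" for \<theta>
  define \<Phi> where "\<Phi> w = Fs (Im (Ln w))" for w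
  define cs where "cs t = sqrt (cos (Arg (z t)))" for t
  define A where "A t = - cs t * y' t / V t" for t
  define B where "B t = cs t * x' t / V t" for t
  have cos_eq: "cos (Arg (z t)) = x' t / sq t" if "t \<in> {a..b}" for t
    using cos_Arg[OF znz[OF that]] zcmod[of t] by (simp add: z_def)
  have cs01: "0 \<le> cs t \<and> cs t \<le> 1" if "t \<in> {a..b}" for t
    using cos_ge_zero[of "Arg (z t)"] zArg[OF that] by (auto simp: cs_def)
  have cs2: "(cs t)\<^sup>2 = x' t / sq t" if "t \<in> {a..b}" for t
    using cos_eq[OF that] xnn[OF that] sqpos[OF that] by (simp add: cs_def)
  have p2: "pi / 2 < 2" using pi_less_4 by simp
  have der: "(\<Phi> has_derivative (\<lambda>h. A t * Re h + B t * Im h)) (at (Complex (x' t) (y' t)))"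
    if t: "t \<in> {a..b}" for t
  proof -
    let ?w = "z t"
    have wR: "?w \<notin> \<real>\<^sub>\<le>\<^sub>0" using znz[OF t] zRe[OF t]
      by (auto simp: complex_nonpos_Reals_iff complex_eq_iff)
    have d1: "((\<lambda>w. Im (Ln w)) has_derivative (\<lambda>h. Im (inverse ?w * h))) (at ?w)"
      using has_derivative_Im[OF has_field_derivative_imp_has_derivative[OF has_field_derivative_Ln[OF wR]]] .
    have IA: "Im (Ln ?w) = Arg ?w" using Arg_eq_Im_Ln[OF znz[OF t]] by simp
    have d2: "(Fs has_derivative (\<lambda>h. cs t * h)) (at (Im (Ln ?w)))"
      unfolding IA cs_def Fs_def
      by (rule has_field_derivative_imp_has_derivative[OF Fs_deriv]) (use zArg[OF t] p2 in auto)
    have "(\<Phi> has_derivative (\<lambda>h. cs t * Im (inverse ?w * h))) (at ?w)"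
      unfolding \<Phi>_def by (rule has_derivative_compose[OF d1 d2])
    moreover have "(\<lambda>h. cs t * Im (inverse ?w * h)) = (\<lambda>h. A t * Re h + B t * Im h)"
    proof
      fix h :: complex
      have "Im (inverse ?w * h) = x' t * inverse (V t) * Im h - y' t * inverse (V t) * Re h"
        by (simp add: z_def V_def divide_inverse algebra_simps)
      then show "cs t * Im (inverse ?w * h) = A t * Re h + B t * Im h"
        unfolding A_def B_def divide_inverse by (simp only:) (simp add: algebra_simps)
    qed
    ultimately show ?thesis unfolding z_def by simp
  qed
  have bdA: "\<bar>A t\<bar> \<le> 1 / m" and bdB: "\<bar>B t\<bar> \<le> 1 / m" if t: "t \<in> {a..b}" for t
  proof -
    have ay: "\<bar>y' t\<bar> \<le> sq t" unfolding sq_def V_def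
      by (metis real_sqrt_abs real_sqrt_le_mono le_add_same_cancel2 zero_le_power2)
    have ax: "\<bar>x' t\<bar> \<le> sq t" unfolding sq_def V_def
      by (metis real_sqrt_abs real_sqrt_le_mono le_add_same_cancel1 zero_le_power2)
    have s: "sq t > 0" "m \<le> sq t" using sqpos[OF t] msq[OF t] by auto
    have key: "cs t * \<bar>u\<bar> / V t \<le> 1 / m" if "\<bar>u\<bar> \<le> sq t" for u
    proof -
      have "cs t * \<bar>u\<bar> \<le> 1 * sq t" using cs01[OF t] that by (intro mult_mono) auto
      then have "cs t * \<bar>u\<bar> / V t \<le> sq t / V t"
        using Vpos[OF t] by (intro divide_right_mono) auto
      also have "\<dots> = sq t / (sq t)\<^sup>2" using sqV[OF t] by simp
      also have "\<dots> = 1 / sq t" using s by (simp add: power2_eq_square)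
      also have "\<dots> \<le> 1 / m" using s mpos by (simp add: frac_le)
      finally show ?thesis .
    qed
    show "\<bar>A t\<bar> \<le> 1 / m" using key[OF ay] cs01[OF t] Vpos[OF t] by (simp add: A_def abs_mult abs_divide)
    show "\<bar>B t\<bar> \<le> 1 / m" using key[OF ax] cs01[OF t] Vpos[OF t] by (simp add: B_def abs_mult abs_divide)
  qed
  define D where "D t = A t * x'' t + B t * y'' t" for t
  have sub1: "{a..t0} \<subseteq> {a..b}" and sub2: "{t0..b} \<subseteq> {a..b}" using t0 by auto
  have c1: "(D has_integral (\<Phi> (Complex (x' t0) (y' t0)) - \<Phi> (Complex (x' a) (y' a)))) {a..t0}"
    unfolding D_def
    by (rule chain_AC[where M="1/m"])
       (use t0 sub1 PX PY der bdA bdB absolutely_integrable_on_subinterval[OF ixx sub1]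
            absolutely_integrable_on_subinterval[OF iyy sub1] in auto)
  have c2: "(D has_integral (\<Phi> (Complex (x' b) (y' b)) - \<Phi> (Complex (x' t0) (y' t0)))) {t0..b}"
    unfolding D_def
    by (rule chain_AC[where M="1/m"])
       (use t0 sub2 PX PY der bdA bdB absolutely_integrable_on_subinterval[OF ixx sub2]
            absolutely_integrable_on_subinterval[OF iyy sub2] in auto)
  have xt0: "x' t0 > 0"
  proof -
    have "t0 \<in> {a..b}" using t0 by auto
    from xnn[OF this] Vpos[OF this] assms(7) show ?thesis by (auto simp: V_def)
  qed
  have Arg0: "Arg (z t0) = 0"
    using xt0 assms(7) Arg_of_real[of "x' t0"] by (simp add: z_def complex_of_real_def)
  have PhiE: "\<Phi> (Complex (x' t) (y' t)) = Fs (Arg (z t))" if "t \<in> {a..b}" for t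
    using Arg_eq_Im_Ln[OF znz[OF that]] by (simp add: \<Phi>_def z_def)
  have ain: "a \<in> {a..b}" and bin: "b \<in> {a..b}" and t0in: "t0 \<in> {a..b}" using t0 by auto
  define I1 where "I1 = Fs 0 - Fs (Arg (z a))"
  define I2 where "I2 = Fs (Arg (z b)) - Fs 0"
  have c1': "(D has_integral I1) {a..t0}"
    using c1 unfolding PhiE[OF t0in] PhiE[OF ain] Arg0 I1_def .
  have c2': "(D has_integral I2) {t0..b}"
    using c2 unfolding PhiE[OF t0in] PhiE[OF bin] Arg0 I2_def .
  have f1: "fpsi (tangent_angle (x' a) (y' a)) = \<bar>I1\<bar>"
    using fpsi_eq[OF zArg[OF ain]] unfolding tangent_angle_def I1_def Fs_def z_def
    by (simp add: abs_minus_commute)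
  have f2: "fpsi (tangent_angle (x' b) (y' b)) = \<bar>I2\<bar>"
    using fpsi_eq[OF zArg[OF bin]] unfolding tangent_angle_def I2_def Fs_def z_def
    by simp
  define K where "K t = ((x' t * y'' t - y' t * x'' t) / (sqrt ((x' t)\<^sup>2 + (y' t)\<^sup>2)) ^ 3)\<^sup>2
                           * sqrt ((x' t)\<^sup>2 + (y' t)\<^sup>2)" for t
  have Ksq: "K t = ((x' t * y'' t - y' t * x'' t) / (sq t) ^ 3)\<^sup>2 * sq t" for t
    by (simp add: K_def sq_def V_def)
  have K0: "K t \<ge> 0" if "t \<in> {a..b}" for t using sqpos[OF that] by (simp add: Ksq)
  have DK: "(D t)\<^sup>2 = K t * x' t" if t: "t \<in> {a..b}" for t
  proof -
    define W where "W = x' t * y'' t - y' t * x'' t"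
    have Dt: "D t = cs t * W / (sq t)\<^sup>2"
      unfolding D_def A_def B_def W_def sqV[OF t] by (simp add: divide_inverse algebra_simps)
    have s: "sq t \<noteq> 0" using sqpos[OF t] by simp
    have "(D t)\<^sup>2 = (cs t)\<^sup>2 * W\<^sup>2 / (sq t) ^ 4"
      unfolding Dt by (simp add: power_divide power_mult_distrib flip: power_mult)
    also have "\<dots> = x' t / sq t * W\<^sup>2 / (sq t) ^ 4" unfolding cs2[OF t] ..
    also have "\<dots> = (W / (sq t) ^ 3)\<^sup>2 * sq t * x' t"
    proof -
      have p6: "sq t ^ 6 = sq t * (sq t * sq t ^ 4)" by (simp add: eval_nat_numeral)
      show ?thesis using s p6 by (simp add: field_simps power2_eq_square)
    qed
    finally show ?thesis unfolding Ksq W_def .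
  qed
  have mx'[measurable]: "x' \<in> borel_measurable (lebesgue_on {a..b})"
    by (rule continuous_imp_measurable_on_sets_lebesgue[OF contx]) simp
  have my'[measurable]: "y' \<in> borel_measurable (lebesgue_on {a..b})"
    by (rule continuous_imp_measurable_on_sets_lebesgue[OF conty]) simp
  have mx''[measurable]: "x'' \<in> borel_measurable (lebesgue_on {a..b})"
    by (rule integrable_imp_measurable[OF ixi])
  have my''[measurable]: "y'' \<in> borel_measurable (lebesgue_on {a..b})"
    by (rule integrable_imp_measurable[OF iyi])
  have mK: "K \<in> borel_measurable (lebesgue_on {a..b})" unfolding K_def by measurable
  have Kbd: "norm (K t) \<le> (1 / m ^ 3) * ((x'' t)\<^sup>2 + (y'' t)\<^sup>2)" if t: "t \<in> {a..b}" for t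
  proof -
    define W where "W = x' t * y'' t - y' t * x'' t"
    define G where "G = (x'' t)\<^sup>2 + (y'' t)\<^sup>2"
    have s: "sq t > 0" using sqpos[OF t] by simp
    have G0: "G \<ge> 0" by (simp add: G_def)
    have lag: "W\<^sup>2 \<le> (sq t)\<^sup>2 * G"
    proof -
      have "(sq t)\<^sup>2 * G - W\<^sup>2 = (x' t * x'' t + y' t * y'' t)\<^sup>2"
        unfolding sqV[OF t] V_def G_def W_def by (simp add: power2_eq_square algebra_simps)
      then show ?thesis by (metis diff_ge_0_iff_ge zero_le_power2)
    qed
    have "K t = (W / (sq t) ^ 3)\<^sup>2 * sq t" by (simp add: Ksq W_def)
    also have "\<dots> = W\<^sup>2 / (sq t) ^ 5"
    proof -
      have p6: "sq t ^ 6 = sq t * sq t ^ 5" by (simp add: eval_nat_numeral)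
      show ?thesis using s p6 by (simp add: field_simps power2_eq_square)
    qed
    also have "\<dots> \<le> (sq t)\<^sup>2 * G / (sq t) ^ 5" using lag s by (intro divide_right_mono) auto
    also have "\<dots> = G / (sq t) ^ 3"
    proof -
      have p5: "sq t ^ 5 = sq t * (sq t * sq t ^ 3)" by (simp add: eval_nat_numeral)
      show ?thesis using s p5 by (simp add: field_simps power2_eq_square)
    qed
    also have "\<dots> \<le> G / m ^ 3" using G0 mpos msq[OF t]
      by (intro divide_left_mono power_mono mult_pos_pos) auto
    finally show ?thesis using K0[OF t] by (simp add: G_def)
  qed
  have Kint: "K integrable_on {a..b}"
  proof (rule measurable_bounded_by_integrable_imp_integrable[OF mK _ Kbd])
    show "(\<lambda>t. 1 / m ^ 3 * ((x'' t)\<^sup>2 + (y'' t)\<^sup>2)) integrable_on {a..b}"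
      by (intro integrable_on_mult_right integrable_add ix2 iy2)
  qed auto
  define E1 where "E1 = integral {a..t0} K"
  define E2 where "E2 = integral {t0..b} K"
  have iK1: "(K has_integral E1) {a..t0}" unfolding E1_def
    by (rule integrable_integral[OF integrable_on_subinterval[OF Kint sub1]])
  have iK2: "(K has_integral E2) {t0..b}" unfolding E2_def
    by (rule integrable_integral[OF integrable_on_subinterval[OF Kint sub2]])
  have Esum: "elastic_energy a b x' y' x'' y'' = E1 + E2"
    unfolding elastic_energy_def E1_def E2_def K_def[symmetric]
    by (rule Henstock_Kurzweil_Integration.integral_combine[symmetric]) (use t0 Kint in auto)
  have X1: "(x' has_integral (x t0 - x a)) {a..t0}"
  proof (rule fundamental_theorem_of_calculus)
    show "a \<le> t0" using t0 by simp
    fix t assume "t \<in> {a..t0}"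
    then have "t \<in> {a..b}" using sub1 by auto
    then have "(x has_vector_derivative x' t) (at t within {a..b})"
      using dx has_real_derivative_iff_has_vector_derivative by blast
    then show "(x has_vector_derivative x' t) (at t within {a..t0})"
      by (rule has_vector_derivative_within_subset[OF _ sub1])
  qed
  have X2: "(x' has_integral (x b - x t0)) {t0..b}"
  proof (rule fundamental_theorem_of_calculus)
    show "t0 \<le> b" using t0 by simp
    fix t assume "t \<in> {t0..b}"
    then have "t \<in> {a..b}" using sub2 by auto
    then have "(x has_vector_derivative x' t) (at t within {a..b})"
      using dx has_real_derivative_iff_has_vector_derivative by blast
    then show "(x has_vector_derivative x' t) (at t within {t0..b})"
      by (rule has_vector_derivative_within_subset[OF _ sub2])
  qed
  have cs1: "I1\<^sup>2 \<le> E1 * (x t0 - x a)"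
    by (rule cs_integral[OF c1' iK1 X1]) (use sub1 K0 xnn DK in auto)
  have cs2': "I2\<^sup>2 \<le> E2 * (x b - x t0)"
    by (rule cs_integral[OF c2' iK2 X2]) (use sub2 K0 xnn DK in auto)
  have E10: "E1 \<ge> 0" using has_integral_nonneg[OF iK1] K0 sub1 by auto
  have E20: "E2 \<ge> 0" using has_integral_nonneg[OF iK2] K0 sub2 by auto
  have X10: "x t0 - x a \<ge> 0" using has_integral_nonneg[OF X1] xnn sub1 by auto
  have X20: "x b - x t0 \<ge> 0" using has_integral_nonneg[OF X2] xnn sub2 by auto
  have "(\<bar>I1\<bar> + \<bar>I2\<bar>)\<^sup>2 / ((x t0 - x a) + (x b - x t0)) \<le> E1 + E2"
    by (rule final_ineq) (use E10 E20 X10 X20 cs1 cs2' in auto)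
  then show ?thesis unfolding f1 f2 Esum by simp
qed

end
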